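(* Let $u,v\ge0$ be real numbers and let $\mu=\sum_{i,j\ge0}\sum_{\sigma\in\Delta}c_{\sigma,i,j}\sigma X^iY^j\in D^{(u,v)}(G_{p^\infty},F)$. Let $\omega_{\mathfrak p}\in\Omega_{\mathfrak p}$ and put $F'=F(\omega_{\mathfrak p}(\gamma_{\mathfrak p}))$. Then the distribution $\mu^{(\omega_{\mathfrak p})}$ lies in $D^{(v)}(G_{\overline{\mathfrak p}^\infty},F')$.
   Context: Let $K$ be an imaginary quadratic field in which the odd prime $p$ splits as $\mathfrak p\overline{\mathfrak p}$. For an ideal $\mathfrak I$ of $K$, $G_{\mathfrak I}$ is the ray class group of $K$ modulo $\mathfrak I$; $G_{p^\infty}=\varprojlim G_{p^n}$, $G_{\mathfrak p^\infty}=\varprojlim G_{\mathfrak p^n}$, $G_{\overline{\mathfrak p}^\infty}=\varprojlim G_{\overline{\mathfrak p}^n}$. Fix topological generators $\gamma_{\mathfrak p},\gamma_{\overline{\mathfrak p}}$ of the $\mathbb{Z}_p$-parts of $G_{\mathfrak p^\infty}$, $G_{\overline{\mathfrak p}^\infty}$, so $G_{p^\infty}\cong\Delta\times\langle\gamma_{\mathfrak p}\rangle\times\langle\gamma_{\overline{\mathfrak p}}\rangle$ with $\Delta$ finite abelian; $X=\gamma_{\mathfrak p}-1$, $Y=\gamma_{\overline{\mathfrak p}}-1$. $F$ is a finite extension of $\mathbb{Q}_p$ containing $\mu_{|\Delta|}$. For $u,v\ge0$, $D^{(u,v)}(G_{p^\infty},F)$ is the set of $\sum_{i,j\ge0}\sum_{\sigma\in\Delta}c_{\sigma,i,j}\sigma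 X^iY^j$ with $c_{\sigma,i,j}\in F$ and $\sup_{i,j}|c_{\sigma,i,j}|_p/(i^uj^v)<\infty$ for all $\sigma$ (powers of $0$ read as $1$). One-variable spaces $D^{(v)}(\cdot,F')$ are defined analogously with a single variable: series $\sum_j\sum_\sigma c_{\sigma,j}\sigma Y^j$ with $\sup_j|c_{\sigma,j}|_p/j^v<\infty$. For $\star\in\{\mathfrak p,\overline{\mathfrak p}\}$, $\Omega_\star$ is the set of characters of $G_{p^\infty}$ of conductor $\star^n$ for some $n\ge1$. For $\omega_{\mathfrak p}\in\Omega_{\mathfrak p}$, $\mu^{(\omega_{\mathfrak p})}$ denotes the one-variable distribution $\sum_{j\ge0}\sum_{\sigma\in\Delta}\big(\sum_{i\ge0}c_{\sigma,i,j}(\omega_{\mathfrak p}(\gamma_{\mathfrak p})-1)^i\big)\sigma Y^j$ (up to the root-of-unity factors $\omega_{\mathfrak p}(\sigma)$), characterised by $\mu^{(\omega_{\mathfrak p})}(\omega_{\overline{\mathfrak p}})=\mu(\omega_{\mathfrak p}\omega_{\overline{\mathfrak p}})$ for $\omega_{\overline{\mathfrak p}}\in\Omega_{\overline{\mathfrak p}}$. *)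

theory Defs
  imports Complex_Main "HOL-Computational_Algebra.Primes"
begin

definition nonarch_abs :: "('k::field \<Rightarrow> real) \<Rightarrow> bool" where
  "nonarch_abs a \<longleftrightarrow>
     (\<forall>x. 0 \<le> a x) \<and> (\<forall>x. a x = 0 \<longleftrightarrow> x = 0) \<and>
     (\<forall>x y. a (x * y) = a x * a y) \<and> (\<forall>x y. a (x + y) \<le> max (a x) (a y))"

definition abs_tendsto :: "('k::field \<Rightarrow> real) \<Rightarrow> (nat \<Rightarrow> 'k) \<Rightarrow> 'k \<Rightarrow> bool" where
  "abs_tendsto a f L \<longleftrightarrow> (\<lambda>n. a (f n - L)) \<longlonglongrightarrow> 0"

definition abs_cauchy :: "('k::field \<Rightarrow> real) \<Rightarrow> (nat \<Rightarrow> 'k) \<Rightarrow> bool" where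
  "abs_cauchy a f \<longleftrightarrow> (\<forall>e>0. \<exists>N. \<forall>m\<ge>N. \<forall>n\<ge>N. a (f m - f n) < e)"

definition abs_complete :: "('k::field \<Rightarrow> real) \<Rightarrow> 'k set \<Rightarrow> bool" where
  "abs_complete a S \<longleftrightarrow>
     (\<forall>f. (\<forall>n. f n \<in> S) \<longrightarrow> abs_cauchy a f \<longrightarrow> (\<exists>L\<in>S. abs_tendsto a f L))"

definition is_subfield :: "'k::field set \<Rightarrow> bool" where
  "is_subfield K \<longleftrightarrow> 0 \<in> K \<and> 1 \<in> K \<and>
     (\<forall>x\<in>K. \<forall>y\<in>K. x + y \<in> K \<and> x * y \<in> K) \<and>
     (\<forall>x\<in>K. - x \<in> K \<and> inverse x \<in> K)"

definition adjoin :: "'k::field set \<Rightarrow> 'k \<Rightarrow> 'k set" where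
  "adjoin F z = \<Inter> {K. is_subfield K \<and> F \<subseteq> K \<and> z \<in> K}"

definition abs_suminf :: "('k::field \<Rightarrow> real) \<Rightarrow> (nat \<Rightarrow> 'k) \<Rightarrow> 'k" where
  "abs_suminf a f = (THE L. abs_tendsto a (\<lambda>n. \<Sum>i<n. f i) L)"

definition wt :: "nat \<Rightarrow> real \<Rightarrow> real" where
  "wt i u = (if i = 0 then 1 else real i powr u)"

text \<open>D^{(u,v)}: coefficient family c sigma i j (coefficient of sigma X^i Y^j).\<close>
definition D2 :: "('k::field \<Rightarrow> real) \<Rightarrow> 'k set \<Rightarrow> 'd set \<Rightarrow> real \<Rightarrow> real
                   \<Rightarrow> ('d \<Rightarrow> nat \<Rightarrow> nat \<Rightarrow> 'k) \<Rightarrow> bool" where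
  "D2 a F \<Delta> u v c \<longleftrightarrow>
     (\<forall>\<sigma>\<in>\<Delta>. \<forall>i j. c \<sigma> i j \<in> F) \<and>
     (\<forall>\<sigma>\<in>\<Delta>. \<exists>C. \<forall>i j. a (c \<sigma> i j) \<le> C * (wt i u * wt j v))"

text \<open>D^{(v)}: one-variable coefficient family d sigma j (coefficient of sigma Y^j).\<close>
definition D1 :: "('k::field \<Rightarrow> real) \<Rightarrow> 'k set \<Rightarrow> 'd set \<Rightarrow> real
                   \<Rightarrow> ('d \<Rightarrow> nat \<Rightarrow> 'k) \<Rightarrow> bool" where
  "D1 a F \<Delta> v d \<longleftrightarrow>
     (\<forall>\<sigma>\<in>\<Delta>. \<forall>j. d \<sigma> j \<in> F) \<and>
     (\<forall>\<sigma>\<in>\<Delta>. \<exists>C. \<forall>j. a (d \<sigma> j) \<le> C * wt j v)"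

text \<open>mu^(omega): coefficient of sigma Y^j is
  w sigma * sum_i c sigma i j (zeta - 1)^i, with zeta = omega(gamma_p), w sigma = omega(sigma).\<close>
definition specialise :: "('k::field \<Rightarrow> real) \<Rightarrow> ('d \<Rightarrow> nat \<Rightarrow> nat \<Rightarrow> 'k) \<Rightarrow> 'k
                          \<Rightarrow> ('d \<Rightarrow> 'k) \<Rightarrow> 'd \<Rightarrow> nat \<Rightarrow> 'k" where
  "specialise a c \<zeta> w \<sigma> j = w \<sigma> * abs_suminf a (\<lambda>i. c \<sigma> i j * (\<zeta> - 1) ^ i)"

end

theory Submission
  imports Defs "HOL-Real_Asymp.Real_Asymp"
begin


context
  fixes a :: "'k::field \<Rightarrow> real"
  assumes na: "nonarch_abs a"
begin

lemma na_nonneg: "0 \<le> a x" and na_zero: "a x = 0 \<longleftrightarrow> x = 0"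
  and na_mult: "a (x*y) = a x * a y" and na_max: "a (x + y) \<le> max (a x) (a y)"
  using na unfolding nonarch_abs_def by auto

lemma na_one: "a 1 = 1"
proof -
  have "a 1 = a 1 * a 1" using na_mult[of 1 1] by simp
  moreover have "a 1 \<noteq> 0" using na_zero by simp
  ultimately show ?thesis by (metis mult_cancel_right1)
qed

lemma na_neg1: "a (-1) = 1"
proof -
  have "a (-1) * a (-1) = 1" using na_mult[of "-1" "-1"] na_one by simp
  with na_nonneg[of "-1"] show ?thesis
    using power2_eq_1_iff[of "a (-1)"] by (simp add: power2_eq_square)
qed

lemma na_uminus: "a (-x) = a x"
  using na_mult[of "-1" x] na_neg1 by simp

lemma na_add: "a (x + y) \<le> a x + a y"
  using na_max[of x y] na_nonneg[of x] na_nonneg[of y] by linarith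

lemma na_diff_sym: "a (x - y) = a (y - x)"
  using na_uminus[of "x - y"] by simp

lemma na_power: "a (x ^ n) = a x ^ n"
  by (induction n) (auto simp: na_one na_mult)

lemma na_sum_le:
  assumes "finite S" "\<And>i. i \<in> S \<Longrightarrow> a (f i) \<le> B" "0 \<le> B"
  shows "a (sum f S) \<le> B"
  using assms
proof (induction S rule: finite_induct)
  case empty then show ?case using na_zero[of 0] by simp
next
  case (insert x F)
  then have "a (f x) \<le> B" "a (sum f F) \<le> B" by auto
  then show ?case using na_max[of "f x" "sum f F"] insert(1,2) by (simp add: max_def split: if_splits)
qed

lemma na_sum_le2:
  assumes "finite S"
  shows "a (sum f S) \<le> (\<Sum>i\<in>S. a (f i))"
  using assms
proof (induction S rule: finite_induct)
  case empty then show ?case using na_zero[of 0] by simp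
next
  case (insert x F)
  then show ?case using na_add[of "f x" "sum f F"] by auto
qed

lemma na_of_nat: "a (of_nat n) \<le> 1"
proof (induction n)
  case 0 then show ?case using na_zero[of 0] by simp
next
  case (Suc n)
  then show ?case using na_max[of 1 "of_nat n"] na_one by simp
qed

lemma na_of_int: "a (of_int z) \<le> 1"
proof (cases "z \<ge> 0")
  case True
  then show ?thesis using na_of_nat[of "nat z"] by simp
next
  case False
  then have "of_int z = - (of_nat (nat (-z)) :: 'k)" by simp
  then show ?thesis using na_of_nat[of "nat (-z)"] na_uminus by simp
qed

lemma na_of_int_dvd:
  assumes "a (of_nat p) = 1 / real p" "int p ^ q dvd z"
  shows "a (of_int z) \<le> (1 / real p) ^ q"
proof -
  obtain y where y: "z = int p ^ q * y" using assms(2) by (auto elim: dvdE)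
  have "(of_int z :: 'k) = of_nat p ^ q * of_int y" by (simp add: y)
  then have "a (of_int z) = a (of_nat p) ^ q * a (of_int y)"
    by (simp add: na_mult na_power)
  also have "\<dots> \<le> (1 / real p) ^ q"
    using na_of_int[of y] assms(1) na_nonneg[of "of_nat p"]
    by (simp add: mult_left_le)
  finally show ?thesis .
qed

lemma limit_unique:
  assumes "abs_tendsto a f L" "abs_tendsto a f L'"
  shows "L = L'"
proof -
  have h: "a (L - L') \<le> a (f n - L) + a (f n - L')" for n
    using na_add[of "L - f n" "f n - L'"] na_diff_sym[of L "f n"] by simp
  have "(\<lambda>n. a (f n - L) + a (f n - L')) \<longlonglongrightarrow> 0 + 0"
    using assms unfolding abs_tendsto_def by (intro tendsto_add)
  then have "a (L - L') \<le> 0"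
    using h by (intro LIMSEQ_le_const) auto
  then show ?thesis using na_nonneg[of "L - L'"] na_zero[of "L - L'"] by simp
qed

lemma suminf_eq:
  assumes "abs_tendsto a (\<lambda>n. \<Sum>i<n. f i) L"
  shows "abs_suminf a f = L"
  unfolding abs_suminf_def
  using assms limit_unique by blast

lemma limit_bound:
  assumes "abs_tendsto a s L" "\<And>n. a (s n) \<le> B"
  shows "a L \<le> B"
proof -
  have h: "a L \<le> a (s n - L) + B" for n
  proof -
    have "a L \<le> a (L - s n) + a (s n)" using na_add[of "L - s n" "s n"] by simp
    then show ?thesis using na_diff_sym[of L "s n"] assms(2)[of n] by linarith
  qed
  have "(\<lambda>n. a (s n - L) + B) \<longlonglongrightarrow> 0 + B"
    using assms unfolding abs_tendsto_def by (intro tendsto_add) auto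
  then show "a L \<le> B"
    using h by (intro LIMSEQ_le_const) auto
qed

lemma subfield_sum:
  assumes "is_subfield K" "\<And>i. i \<in> S \<Longrightarrow> f i \<in> K"
  shows "sum f S \<in> K"
  using assms unfolding is_subfield_def
  by (induction S rule: infinite_finite_induct) auto

lemma subfield_of_nat:
  assumes "is_subfield K" shows "of_nat n \<in> K"
  using assms unfolding is_subfield_def by (induction n) auto

lemma subfield_of_int:
  fixes K :: "'a::field set"
  assumes "is_subfield K" shows "of_int z \<in> K"
proof (cases "z \<ge> 0")
  case True
  then show ?thesis using subfield_of_nat[OF assms, of "nat z"] by simp
next
  case False
  then have "of_int z = - (of_nat (nat (-z)) :: 'a)" by simp
  moreover have "- (of_nat (nat (-z))) \<in> K"
    using subfield_of_nat[OF assms, of "nat (-z)"] assms unfolding is_subfield_def by blast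
  ultimately show ?thesis by metis
qed

lemma series_conv:
  assumes "is_subfield S" "abs_complete a S" "\<And>i. t i \<in> S" "(\<lambda>i. a (t i)) \<longlonglongrightarrow> 0"
  shows "\<exists>L\<in>S. abs_tendsto a (\<lambda>n. \<Sum>i<n. t i) L"
proof -
  have inS: "(\<Sum>i<n. t i) \<in> S" for n by (rule subfield_sum[OF assms(1)]) (rule assms(3))
  have cauchy: "abs_cauchy a (\<lambda>n. \<Sum>i<n. t i)"
    unfolding abs_cauchy_def
  proof (intro allI impI)
    fix e :: real assume e: "e > 0"
    have "e/2 > 0" using e by simp
    from LIMSEQ_D[OF assms(4) this] obtain N where N0: "\<And>i. i \<ge> N \<Longrightarrow> norm (a (t i) - 0) < e/2"
      by blast
    have N: "a (t i) < e/2" if "i \<ge> N" for i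
      using N0[OF that] na_nonneg[of "t i"] by simp
    have key: "a ((\<Sum>i<m. t i) - (\<Sum>i<n. t i)) < e" if "N \<le> n" "n \<le> m" for m n
    proof -
      have "(\<Sum>i<m. t i) = (\<Sum>i<n. t i) + (\<Sum>i\<in>{n..<m}. t i)"
        using sum.atLeastLessThan_concat[of 0 n m t] that by (simp add: lessThan_atLeast0)
      then have "(\<Sum>i<m. t i) - (\<Sum>i<n. t i) = (\<Sum>i\<in>{n..<m}. t i)" by simp
      also have "a \<dots> \<le> e/2"
        using N that e by (intro na_sum_le) (auto intro: less_imp_le)
      finally show ?thesis using e by simp
    qed
    show "\<exists>N. \<forall>m\<ge>N. \<forall>n\<ge>N. a ((\<Sum>i<m. t i) - (\<Sum>i<n. t i)) < e"
    proof (intro exI allI impI)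
      fix m n assume "N \<le> m" "N \<le> n"
      then show "a ((\<Sum>i<m. t i) - (\<Sum>i<n. t i)) < e"
      proof (cases "n \<le> m")
        case True then show ?thesis using key[of n m] \<open>N \<le> n\<close> by simp
      next
        case False
        then have "a ((\<Sum>i<n. t i) - (\<Sum>i<m. t i)) < e" using key[of m n] \<open>N \<le> m\<close> by simp
        then show ?thesis using na_diff_sym[of "\<Sum>i<n. t i" "\<Sum>i<m. t i"] by simp
      qed
    qed
  qed
  moreover have "\<forall>n. (\<lambda>n. \<Sum>i<n. t i) n \<in> S" using inS by simp
  ultimately show ?thesis using assms(2) unfolding abs_complete_def by (metis (no_types, lifting))
qed

end


fun ecoef :: "nat \<Rightarrow> nat \<Rightarrow> nat \<Rightarrow> int" where
  "ecoef N 0 k = (if k = 0 then 1 else 0)"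
| "ecoef N (Suc i) k = (if k = 0 then 0 else ecoef N i (k - 1))
     + (if 0 < k \<and> k < N then - int (N choose k) * ecoef N i (N - 1) else 0)"

lemma rel_N:
  fixes x :: "'a::comm_ring_1"
  assumes "(1 + x) ^ N = 1" "N \<ge> 1"
  shows "x ^ N = (\<Sum>k<N. (if 0 < k then - of_nat (N choose k) else 0) * x ^ k)"
proof -
  have "(x + 1) ^ N = (\<Sum>k\<le>N. of_nat (N choose k) * x ^ k)"
    by (simp add: binomial_ring)
  also have "\<dots> = (\<Sum>k<N. of_nat (N choose k) * x ^ k) + x ^ N"
    by (simp add: lessThan_Suc_atMost[symmetric])
  also have "(\<Sum>k<N. of_nat (N choose k) * x ^ k)
      = (\<Sum>k<N. (if k = 0 then 1 else 0)) + (\<Sum>k<N. (if 0 < k then of_nat (N choose k) else 0) * x ^ k)"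
    by (subst sum.distrib[symmetric], rule sum.cong) auto
  finally have "1 = (\<Sum>k<N. (if k = 0 then 1 else 0 :: 'a)) + (\<Sum>k<N. (if 0 < k then of_nat (N choose k) else 0) * x ^ k) + x ^ N"
    using assms by (simp add: add.commute)
  moreover have "(\<Sum>k<N. (if k = 0 then 1 else 0 :: 'a)) = (if N = 0 then 0 else 1)"
    by (simp add: sum.delta)
  ultimately have "x ^ N + (\<Sum>k<N. (if 0 < k then of_nat (N choose k) else 0) * x ^ k) = 0"
    using assms(2) by (simp add: algebra_simps)
  then have "x ^ N = - (\<Sum>k<N. (if 0 < k then of_nat (N choose k) else 0) * x ^ k)"
    by (simp add: eq_neg_iff_add_eq_0)
  also have "\<dots> = (\<Sum>k<N. (if 0 < k then - of_nat (N choose k) else 0) * x ^ k)"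
    unfolding sum_negf[symmetric] by (rule sum.cong) auto
  finally show ?thesis .
qed

lemma rep_power:
  fixes x :: "'a::comm_ring_1"
  assumes "(1 + x) ^ N = 1" "N \<ge> 1"
  shows "x ^ i = (\<Sum>k<N. of_int (ecoef N i k) * x ^ k)"
proof (induction i)
  case 0
  have "(\<Sum>k<N. of_int (ecoef N 0 k) * x ^ k) = (\<Sum>k<N. if k = 0 then 1 else 0)"
    by (rule sum.cong) auto
  then show ?case using assms(2) by (simp add: sum.delta)
next
  case (Suc i)
  obtain M where M: "N = Suc M" using assms(2) by (cases N) auto
  have "x ^ Suc i = (\<Sum>k<N. of_int (ecoef N i k) * x ^ Suc k)"
    by (simp add: Suc sum_distrib_left algebra_simps)
  also have "\<dots> = (\<Sum>k<M. of_int (ecoef N i k) * x ^ Suc k) + of_int (ecoef N i M) * x ^ N"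
    by (simp add: M)
  also have "x ^ N = (\<Sum>k<N. (if 0 < k then - of_nat (N choose k) else 0) * x ^ k)"
    by (rule rel_N[OF assms])
  also have "(\<Sum>k<M. of_int (ecoef N i k) * x ^ Suc k) = (\<Sum>k<N. (if k = 0 then 0 else of_int (ecoef N i (k - 1))) * x ^ k)"
    unfolding M lessThan_Suc_eq_insert_0 by (simp add: sum.reindex)
  finally have "x ^ Suc i = (\<Sum>k<N. (if k = 0 then 0 else of_int (ecoef N i (k - 1))) * x ^ k
      + of_int (ecoef N i M) * ((if 0 < k then - of_nat (N choose k) else 0) * x ^ k))"
    by (simp add: sum_distrib_left sum.distrib)
  also have "\<dots> = (\<Sum>k<N. of_int (ecoef N (Suc i) k) * x ^ k)"
  proof (rule sum.cong)
    fix k assume "k \<in> {..<N}"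
    then show "(if k = 0 then 0 else of_int (ecoef N i (k - 1))) * x ^ k
      + of_int (ecoef N i M) * ((if 0 < k then - of_nat (N choose k) else 0) * x ^ k)
      = of_int (ecoef N (Suc i) k) * x ^ k"
      by (cases "k = 0") (simp_all add: algebra_simps M)
  qed simp
  finally show ?case .
qed

lemma ecoef_dvd:
  fixes p N :: nat
  assumes hP: "\<And>k. 0 < k \<Longrightarrow> k < N \<Longrightarrow> p dvd (N choose k)" and "N \<ge> 1"
  shows "k < N \<Longrightarrow> int p ^ ((i + N - 1 - k) div N) dvd ecoef N i k"
proof (induction i arbitrary: k)
  case 0
  show ?case
  proof (cases "k = 0")
    case True
    then have "(0 + N - 1 - k) div N = 0" using assms(2) by simp
    then show ?thesis by simp
  qed simp
next
  case (Suc i)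
  show ?case
  proof (cases "k = 0")
    case True then show ?thesis by simp
  next
    case False
    have d1: "int p ^ ((Suc i + N - 1 - k) div N) dvd ecoef N i (k - 1)"
    proof -
      have eq: "(Suc i + N - 1 - k) = (i + N - 1 - (k - 1))" using False Suc.prems by simp
      have "k - 1 < N" using Suc.prems by simp
      from Suc.IH[OF this] show ?thesis by (simp only: eq)
    qed
    have d2: "int p ^ ((Suc i + N - 1 - k) div N) dvd int (N choose k) * ecoef N i (N - 1)"
      if "k < N"
    proof -
      have a: "int p dvd int (N choose k)" using hP[of k] False that by simp
      have b: "int p ^ (i div N) dvd ecoef N i (N - 1)"
        using Suc.IH[of "N - 1"] assms(2) by simp
      have "int p ^ (Suc (i div N)) dvd int (N choose k) * ecoef N i (N - 1)"
        using mult_dvd_mono[OF a b] by (simp add: mult.commute)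
      moreover have "(Suc i + N - 1 - k) div N \<le> Suc (i div N)"
      proof -
        have "(Suc i + N - 1 - k) div N \<le> (i + N) div N" using False by (intro div_le_mono) simp
        also have "\<dots> = Suc (i div N)" using assms(2) by (simp add: div_add_self2)
        finally show ?thesis .
      qed
      ultimately show ?thesis using le_imp_power_dvd dvd_trans by blast
    qed
    have "ecoef N (Suc i) k = ecoef N i (k - 1)
       + (if 0 < k \<and> k < N then - int (N choose k) * ecoef N i (N - 1) else 0)"
      using False by simp
    moreover have "int p ^ ((Suc i + N - 1 - k) div N) dvd
        (if 0 < k \<and> k < N then - int (N choose k) * ecoef N i (N - 1) else 0)"
      using d2 Suc.prems by simp
    ultimately show ?thesis using d1 by (metis dvd_add)
  qed
qed

lemma ecoef_dvd2:
  fixes p N :: nat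
  assumes hP: "\<And>k. 0 < k \<Longrightarrow> k < N \<Longrightarrow> p dvd (N choose k)" and "N \<ge> 1" "k < N"
  shows "int p ^ (i div N) dvd ecoef N i k"
proof -
  have "i div N \<le> (i + N - 1 - k) div N" using assms(3) by (intro div_le_mono) simp
  then show ?thesis using ecoef_dvd[OF hP assms(2) assms(3), of i]
    by (meson dvd_trans le_imp_power_dvd)
qed

lemma prime_power_choose:
  fixes p :: nat
  assumes "prime p" "0 < k" "k < p ^ m"
  shows "p dvd (p ^ m choose k)"
proof (rule ccontr)
  assume nd: "\<not> p dvd (p ^ m choose k)"
  obtain K where K: "k = Suc K" using assms(2) by (cases k) auto
  obtain M where M: "p ^ m = Suc M" using assms(3) by (cases "p ^ m") auto
  have "Suc K * (Suc M choose Suc K) = Suc M * (M choose K)"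
    by (rule Suc_times_binomial)
  then have "k * (p ^ m choose k) = p ^ m * (M choose K)" by (simp only: K M)
  then have "p ^ m dvd k * (p ^ m choose k)" by (metis dvd_triv_left)
  moreover have "coprime (p ^ m) (p ^ m choose k)"
    using nd assms(1) by (simp add: prime_imp_coprime)
  ultimately have "p ^ m dvd k" using coprime_dvd_mult_left_iff by blast
  then have "p ^ m \<le> k" using assms(2) by (simp add: dvd_imp_le)
  then show False using assms(3) by simp
qed


lemma null_cmp:
  fixes f :: "'a \<Rightarrow> 'b::real_normed_vector"
  assumes "\<forall>\<^sub>F x in F. norm (f x) \<le> g x" "(g \<longlongrightarrow> 0) F"
  shows "(f \<longlongrightarrow> 0) F"
proof -
  have "((\<lambda>x. norm (f x)) \<longlongrightarrow> 0) F"
    by (rule tendsto_sandwich[of "\<lambda>_. 0" _ F g]) (use assms in auto)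
  then show ?thesis by (rule tendsto_norm_zero_cancel)
qed

lemma subfield_power:
  assumes "is_subfield K" "x \<in> K" shows "x ^ n \<in> K"
  using assms unfolding is_subfield_def by (induction n) auto

lemma subfield_mult:
  assumes "is_subfield K" "x \<in> K" "y \<in> K" shows "x * y \<in> K"
  using assms unfolding is_subfield_def by auto

lemma subfield_diff:
  assumes "is_subfield K" "x \<in> K" "y \<in> K" shows "x - y \<in> K"
proof -
  have "- y \<in> K" using assms unfolding is_subfield_def by blast
  then have "x + - y \<in> K" using assms unfolding is_subfield_def by blast
  then show ?thesis by (simp only: diff_conv_add_uminus)
qed

lemma adjoin_mult:
  assumes "x \<in> adjoin F z" "y \<in> adjoin F z" shows "x * y \<in> adjoin F z"
  using assms subfield_mult unfolding adjoin_def by blast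

lemma adjoin_base:
  assumes "x \<in> F" shows "x \<in> adjoin F z"
  using assms unfolding adjoin_def by blast

lemma g_tendsto:
  fixes p N :: nat and u :: real
  assumes "p > 1" "N \<ge> 1"
  shows "(\<lambda>i. wt i u * (1 / real p) ^ (i div N)) \<longlonglongrightarrow> 0"
proof -
  define b where "b = ln (real p) / real N"
  have b: "b > 0" using assms unfolding b_def by simp
  have lim: "(\<lambda>i. real p * (real i powr u * exp (- b * real i))) \<longlonglongrightarrow> 0"
  proof -
    have "(\<lambda>i. real i powr u * exp (- b * real i)) \<longlonglongrightarrow> 0" using b by real_asymp
    then show ?thesis by (rule tendsto_mult_right_zero)
  qed
  have bound: "(1 / real p) ^ (i div N) \<le> real p * exp (- b * real i)" for i
  proof -
    have e1: "(1 / real p) ^ (i div N) = exp (- (real (i div N) * ln (real p)))"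
      using assms by (simp add: exp_minus exp_of_nat_mult power_one_over inverse_eq_divide)
    have "real i \<le> real N * real (i div N) + real N"
    proof -
      have "i = N * (i div N) + i mod N" by simp
      moreover have "i mod N < N" using assms by simp
      ultimately have "i \<le> N * (i div N) + N" by linarith
      then show ?thesis by (metis of_nat_add of_nat_le_iff of_nat_mult)
    qed
    then have "real i / real N \<le> real (i div N) + 1"
      using assms by (simp add: divide_le_eq algebra_simps)
    then have h1: "ln (real p) * (real i / real N) \<le> ln (real p) * (real (i div N) + 1)"
      using assms by (intro mult_left_mono) auto
    have h2: "b * real i = ln (real p) * (real i / real N)" unfolding b_def by simp
    have "- b * real i \<ge> - (real (i div N) * ln (real p)) - ln (real p)"
      using h1 h2 by (simp add: algebra_simps)
    then have "exp (- (real (i div N) * ln (real p))) \<le> exp (- b * real i + ln (real p))"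
      by simp
    also have "\<dots> = real p * exp (- b * real i)"
      using assms by (simp add: exp_diff exp_minus field_simps)
    finally show ?thesis using e1 by simp
  qed
  show ?thesis
  proof (rule null_cmp[OF _ lim])
    show "\<forall>\<^sub>F i in sequentially. norm (wt i u * (1 / real p) ^ (i div N)) \<le> real p * (real i powr u * exp (- b * real i))"
      using eventually_ge_at_top[of 1]
    proof (rule eventually_mono)
      fix i :: nat assume "1 \<le> i"
      then have w: "wt i u = real i powr u" unfolding wt_def by simp
      have "norm (wt i u * (1 / real p) ^ (i div N)) = real i powr u * (1 / real p) ^ (i div N)"
        using w by simp
      also have "\<dots> \<le> real i powr u * (real p * exp (- b * real i))"
        by (rule mult_left_mono[OF bound]) simp
      finally show "norm (wt i u * (1 / real p) ^ (i div N)) \<le> real p * (real i powr u * exp (- b * real i))"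
        by (simp add: algebra_simps)
    qed
  qed
qed

context
  fixes a :: "'k::field \<Rightarrow> real"
  assumes na: "nonarch_abs a"
begin

lemma main1:
  fixes F :: "'k set" and \<zeta> :: 'k and N p :: nat and c' :: "nat \<Rightarrow> 'k" and B M :: real
  assumes F: "is_subfield F" "abs_complete a F"
    and rootN: "(1 + (\<zeta> - 1)) ^ N = 1" and N1: "N \<ge> 1"
    and hP: "\<And>k. 0 < k \<Longrightarrow> k < N \<Longrightarrow> p dvd (N choose k)"
    and ap: "a (of_nat p) = 1 / real p"
    and cF: "\<And>i. c' i \<in> F" and cB: "\<And>i. a (c' i) \<le> B * wt i u" and B0: "B \<ge> 0"
    and glim: "(\<lambda>i. wt i u * (1 / real p) ^ (i div N)) \<longlonglongrightarrow> 0"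
    and gM: "\<And>i. wt i u * (1 / real p) ^ (i div N) \<le> M"
  shows "\<exists>L. abs_tendsto a (\<lambda>n. \<Sum>i<n. c' i * (\<zeta> - 1) ^ i) L \<and> L \<in> adjoin F \<zeta>
     \<and> a L \<le> B * M * (\<Sum>k<N. a (\<zeta> - 1) ^ k)"
proof -
  define \<pi> where "\<pi> = \<zeta> - 1"
  define t where "t k i = c' i * of_int (ecoef N i k)" for k i
  have tB: "a (t k i) \<le> B * (wt i u * (1 / real p) ^ (i div N))" if "k < N" for k i
  proof -
    have "a (of_int (ecoef N i k) :: 'k) \<le> (1 / real p) ^ (i div N)"
      by (rule na_of_int_dvd[OF na ap ecoef_dvd2[OF hP N1 that]])
    then have "a (t k i) \<le> (B * wt i u) * (1 / real p) ^ (i div N)"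
      unfolding t_def na_mult[OF na]
      using cB[of i] na_nonneg[OF na] B0
      by (meson mult_mono order_trans) 
    then show ?thesis by (simp add: algebra_simps)
  qed
  have tlim: "(\<lambda>i. a (t k i)) \<longlonglongrightarrow> 0" if "k < N" for k
  proof (rule null_cmp[OF _ tendsto_mult_right_zero[OF glim, of B]])
    show "\<forall>\<^sub>F i in sequentially. norm (a (t k i)) \<le> B * (wt i u * (1 / real p) ^ (i div N))"
      using tB[OF that] na_nonneg[OF na] by (simp add: abs_of_nonneg)
  qed
  have tF: "t k i \<in> F" for k i
    unfolding t_def by (rule subfield_mult[OF F(1) cF subfield_of_int[OF na F(1)]])
  have "\<forall>k\<in>{..<N}. \<exists>L. L \<in> F \<and> abs_tendsto a (\<lambda>n. \<Sum>i<n. t k i) L"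
    using series_conv[OF na F tF tlim] by blast
  then obtain Lk where Lk: "\<And>k. k < N \<Longrightarrow> Lk k \<in> F \<and> abs_tendsto a (\<lambda>n. \<Sum>i<n. t k i) (Lk k)"
    by (metis lessThan_iff)
  have MB: "0 \<le> B * M" using B0 gM[of 0] by (simp add: wt_def)
  have Lkb: "a (Lk k) \<le> B * M" if "k < N" for k
  proof (rule limit_bound[OF na conjunct2[OF Lk[OF that]]])
    fix n show "a (\<Sum>i<n. t k i) \<le> B * M"
    proof (rule na_sum_le[OF na _ _ MB])
      fix i show "a (t k i) \<le> B * M"
        using tB[OF that, of i] gM[of i] B0 by (meson mult_left_mono order_trans)
    qed simp
  qed
  define L where "L = (\<Sum>k<N. Lk k * \<pi> ^ k)"
  have psum: "(\<Sum>i<n. c' i * \<pi> ^ i) = (\<Sum>k<N. (\<Sum>i<n. t k i) * \<pi> ^ k)" for n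
  proof -
    have "(\<Sum>i<n. c' i * \<pi> ^ i) = (\<Sum>i<n. \<Sum>k<N. t k i * \<pi> ^ k)"
      by (subst rep_power[OF rootN[folded \<pi>_def] N1]) (simp add: t_def sum_distrib_left mult.assoc)
    also have "\<dots> = (\<Sum>k<N. (\<Sum>i<n. t k i) * \<pi> ^ k)"
      by (subst sum.swap) (simp add: sum_distrib_right)
    finally show ?thesis .
  qed
  have tend: "abs_tendsto a (\<lambda>n. \<Sum>i<n. c' i * \<pi> ^ i) L"
    unfolding abs_tendsto_def
  proof (rule null_cmp)
    have "(\<lambda>n. \<Sum>k<N. a ((\<Sum>i<n. t k i) - Lk k) * a \<pi> ^ k) \<longlonglongrightarrow> (\<Sum>k<N. 0 * a \<pi> ^ k)"
      using Lk unfolding abs_tendsto_def by (intro tendsto_sum tendsto_mult tendsto_const) auto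
    then show "(\<lambda>n. \<Sum>k<N. a ((\<Sum>i<n. t k i) - Lk k) * a \<pi> ^ k) \<longlonglongrightarrow> 0" by simp
    show "\<forall>\<^sub>F n in sequentially. norm (a ((\<Sum>i<n. c' i * \<pi> ^ i) - L)) \<le> (\<Sum>k<N. a ((\<Sum>i<n. t k i) - Lk k) * a \<pi> ^ k)"
    proof (rule always_eventually, rule allI)
      fix n
      have "(\<Sum>i<n. c' i * \<pi> ^ i) - L = (\<Sum>k<N. ((\<Sum>i<n. t k i) - Lk k) * \<pi> ^ k)"
        unfolding psum L_def by (simp add: sum_subtractf algebra_simps)
      then have "a ((\<Sum>i<n. c' i * \<pi> ^ i) - L) \<le> (\<Sum>k<N. a (((\<Sum>i<n. t k i) - Lk k) * \<pi> ^ k))"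
        by (simp only:) (rule na_sum_le2[OF na], simp)
      also have "\<dots> = (\<Sum>k<N. a ((\<Sum>i<n. t k i) - Lk k) * a \<pi> ^ k)"
        by (simp add: na_mult[OF na] na_power[OF na])
      finally show "norm (a ((\<Sum>i<n. c' i * \<pi> ^ i) - L)) \<le> (\<Sum>k<N. a ((\<Sum>i<n. t k i) - Lk k) * a \<pi> ^ k)"
        using na_nonneg[OF na] by simp
    qed
  qed
  have Lin: "L \<in> adjoin F \<zeta>"
    unfolding adjoin_def
  proof
    fix K assume "K \<in> {K. is_subfield K \<and> F \<subseteq> K \<and> \<zeta> \<in> K}"
    then have K: "is_subfield K" "F \<subseteq> K" "\<zeta> \<in> K" by auto
    have piK: "\<pi> \<in> K" unfolding \<pi>_def
      using subfield_diff[OF K(1) K(3)] K(1) unfolding is_subfield_def by blast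
    show "L \<in> K" unfolding L_def
      using Lk K(2) by (intro subfield_sum[OF na K(1)] subfield_mult[OF K(1)] subfield_power[OF K(1) piK]) auto
  qed
  have Lb: "a L \<le> B * M * (\<Sum>k<N. a \<pi> ^ k)"
  proof -
    have "a L \<le> (\<Sum>k<N. a (Lk k * \<pi> ^ k))" unfolding L_def by (rule na_sum_le2[OF na]) simp
    also have "\<dots> \<le> (\<Sum>k<N. B * M * a \<pi> ^ k)"
    proof (rule sum_mono)
      fix k assume "k \<in> {..<N}"
      then show "a (Lk k * \<pi> ^ k) \<le> B * M * a \<pi> ^ k"
        using Lkb[of k] na_nonneg[OF na, of \<pi>]
        by (simp add: na_mult[OF na] na_power[OF na] mult_right_mono)
    qed
    finally show ?thesis by (simp add: sum_distrib_left)
  qed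
  show ?thesis using tend Lin Lb unfolding \<pi>_def by blast
qed

end

theorem lemma2p1:
  fixes a :: "'k::field_char_0 \<Rightarrow> real"
    and p :: nat and F :: "'k set" and \<Delta> :: "'d set"
    and u v :: real and c :: "'d \<Rightarrow> nat \<Rightarrow> nat \<Rightarrow> 'k"
    and \<zeta> :: 'k and w :: "'d \<Rightarrow> 'k"
  assumes "prime p" and "odd p"
    and "nonarch_abs a" and "abs_complete a UNIV"
    and "a (of_nat p) = 1 / real p"
    and "is_subfield F" and "abs_complete a F"
    and "finite \<Delta>"
    and "\<forall>\<sigma>\<in>\<Delta>. w \<sigma> \<in> F \<and> w \<sigma> ^ card \<Delta> = 1"
    and "\<exists>m. \<zeta> ^ (p ^ m) = 1"
    and "0 \<le> u" and "0 \<le> v"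
    and "D2 a F \<Delta> u v c"
  shows "(\<forall>\<sigma>\<in>\<Delta>. \<forall>j. \<exists>L. abs_tendsto a (\<lambda>n. \<Sum>i<n. c \<sigma> i j * (\<zeta> - 1) ^ i) L)
         \<and> D1 a (adjoin F \<zeta>) \<Delta> v (specialise a c \<zeta> w)"
proof -
  note na = assms(3)
  obtain m where m: "\<zeta> ^ (p ^ m) = 1" using assms(10) by blast
  define N where "N = p ^ m"
  have p1: "p > 1" using assms(1) prime_gt_1_nat by blast
  have N1: "N \<ge> 1" unfolding N_def using p1 by simp
  have rootN: "(1 + (\<zeta> - 1)) ^ N = 1" using m unfolding N_def by simp
  have hP: "p dvd (N choose k)" if "0 < k" "k < N" for k
    using prime_power_choose[OF assms(1) that[unfolded N_def]] unfolding N_def .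
  have glim: "(\<lambda>i. wt i u * (1 / real p) ^ (i div N)) \<longlonglongrightarrow> 0"
    by (rule g_tendsto[OF p1 N1])
  obtain M where gM0: "\<And>i. norm (wt i u * (1 / real p) ^ (i div N)) \<le> M"
    using convergent_imp_Bseq[OF convergentI[OF glim]] unfolding Bseq_def by blast
  have gM: "wt i u * (1 / real p) ^ (i div N) \<le> M" for i
    using gM0[of i] by simp
  define P where "P = (\<Sum>k<N. a (\<zeta> - 1) ^ k)"
  have wt_pos: "wt i x > 0" for i x unfolding wt_def by simp
  have key: "\<exists>C. \<forall>j. \<exists>L. abs_tendsto a (\<lambda>n. \<Sum>i<n. c \<sigma> i j * (\<zeta> - 1) ^ i) L
      \<and> L \<in> adjoin F \<zeta> \<and> a L \<le> C * wt j v" if s: "\<sigma> \<in> \<Delta>" for \<sigma>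
  proof -
    obtain C where C: "\<And>i j. a (c \<sigma> i j) \<le> C * (wt i u * wt j v)"
      using assms(13) s unfolding D2_def by blast
    have C0: "C \<ge> 0"
    proof -
      have "0 \<le> C * (wt 0 u * wt 0 v)" using C[of 0 0] na_nonneg[OF na] order_trans by blast
      then show ?thesis by (simp add: wt_def)
    qed
    have "\<exists>L. abs_tendsto a (\<lambda>n. \<Sum>i<n. c \<sigma> i j * (\<zeta> - 1) ^ i) L
      \<and> L \<in> adjoin F \<zeta> \<and> a L \<le> (C * M * P) * wt j v" for j
    proof -
      have cF: "c \<sigma> i j \<in> F" for i using assms(13) s unfolding D2_def by blast
      have cB: "a (c \<sigma> i j) \<le> (C * wt j v) * wt i u" for i using C[of i j] by (simp add: algebra_simps)
      have B0: "C * wt j v \<ge> 0" using C0 wt_pos[of j v] by simp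
      from main1[OF na assms(6,7) rootN N1 hP assms(5) cF cB B0 glim gM]
      show ?thesis unfolding P_def by (simp add: algebra_simps)
    qed
    then show ?thesis by blast
  qed
  show ?thesis
  proof (intro conjI ballI allI)
    fix \<sigma> j assume "\<sigma> \<in> \<Delta>"
    then show "\<exists>L. abs_tendsto a (\<lambda>n. \<Sum>i<n. c \<sigma> i j * (\<zeta> - 1) ^ i) L" using key by blast
  next
    show "D1 a (adjoin F \<zeta>) \<Delta> v (specialise a c \<zeta> w)"
      unfolding D1_def
    proof (intro conjI ballI allI)
      fix \<sigma> j assume s: "\<sigma> \<in> \<Delta>"
      obtain C where C: "\<And>j. \<exists>L. abs_tendsto a (\<lambda>n. \<Sum>i<n. c \<sigma> i j * (\<zeta> - 1) ^ i) L
        \<and> L \<in> adjoin F \<zeta> \<and> a L \<le> C * wt j v" using key[OF s] by blast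
      from C[of j] obtain L where L: "abs_tendsto a (\<lambda>n. \<Sum>i<n. c \<sigma> i j * (\<zeta> - 1) ^ i) L"
        "L \<in> adjoin F \<zeta>" by blast
      have sp: "specialise a c \<zeta> w \<sigma> j = w \<sigma> * L"
        unfolding specialise_def using suminf_eq[OF na L(1)] by simp
      show "specialise a c \<zeta> w \<sigma> j \<in> adjoin F \<zeta>"
        unfolding sp using assms(9) s L(2) by (intro adjoin_mult[OF adjoin_base]) auto
    next
      fix \<sigma> assume s: "\<sigma> \<in> \<Delta>"
      obtain C where C: "\<And>j. \<exists>L. abs_tendsto a (\<lambda>n. \<Sum>i<n. c \<sigma> i j * (\<zeta> - 1) ^ i) L
        \<and> L \<in> adjoin F \<zeta> \<and> a L \<le> C * wt j v" using key[OF s] by blast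
      show "\<exists>C. \<forall>j. a (specialise a c \<zeta> w \<sigma> j) \<le> C * wt j v"
      proof (intro exI allI)
        fix j
        from C[of j] obtain L where L: "abs_tendsto a (\<lambda>n. \<Sum>i<n. c \<sigma> i j * (\<zeta> - 1) ^ i) L"
          "a L \<le> C * wt j v" by blast
        have "a (specialise a c \<zeta> w \<sigma> j) = a (w \<sigma>) * a L"
          unfolding specialise_def using suminf_eq[OF na L(1)] by (simp add: na_mult[OF na])
        also have "\<dots> \<le> a (w \<sigma>) * (C * wt j v)"
          using L(2) na_nonneg[OF na] by (simp add: mult_left_mono)
        finally show "a (specialise a c \<zeta> w \<sigma> j) \<le> (a (w \<sigma>) * C) * wt j v" by (simp add: mult.assoc)
      qed
    qed
  qed
qed

end
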